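(* The generating function $$F_{(132,321)}(x,p,q,u,v,s,t)=\sum_{n\ge0}\ \sum_{\pi\in S_n(132,321)} x^n p^{\operatorname{asc}(\pi)}q^{\operatorname{des}(\pi)}u^{\operatorname{lrmax}(\pi)}v^{\operatorname{rlmax}(\pi)}s^{\operatorname{lrmin}(\pi)}t^{\operatorname{rlmin}(\pi)}$$ is equal to $\dfrac{A}{(1-ptx)(1-pux)(1-ptux)}$, where $$A=1 + s t u v x + q s^2 t u v^2 x^2 - p^3 t^2 u^2 x^3 + p^2 t u x^2 (1 + t + u + s t u v x) - p x\bigl(u + s t^2 u v x (1 + q s u (-1 + v) x) + t (1 + u + s u^2 v x)\bigr).$$
   Context: For $n\ge 0$, $S_n$ denotes the set of permutations $\pi=\pi_1\cdots\pi_n$ of $[n]=\{1,\dots,n\}$ ($S_0$ consists of the empty permutation, for which all statistics are $0$). $\pi$ avoids a pattern $\tau\in S_k$ if no subsequence $\pi_{i_1}\cdots\pi_{i_k}$ ($i_1<\dots<i_k$) satisfies $\pi_{i_a}<\pi_{i_b}\iff\tau_a<\tau_b$; $S_n(\tau,\rho)$ is the set of permutations in $S_n$ avoiding both $\tau$ and $\rho$. $\operatorname{asc}(\pi)$ (resp. $\operatorname{des}(\pi)$) is the number of $i\in[n-1]$ with $\pi_i<\pi_{i+1}$ (resp. $\pi_i>\pi_{i+1}$). $\pi_i$ is a left-to-right maximum (resp. minimum) if it is larger (resp. smaller) than every $\pi_j$ with $j<i$, and a right-to-left maximum (resp. minimum) if it is larger (resp. smaller) than every $\pi_j$ with $j>i$;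 $\operatorname{lrmax},\operatorname{lrmin},\operatorname{rlmax},\operatorname{rlmin}$ count these. *)

theory Defs
  imports "HOL-Computational_Algebra.Formal_Power_Series"
begin

text \<open>Permutations of [n] as lists (one-line notation); list index i (0-based) is position i+1.\<close>
definition perms :: "nat \<Rightarrow> nat list set" where
  "perms n = {xs. distinct xs \<and> set xs = {1..n}}"

definition contains :: "nat list \<Rightarrow> nat list \<Rightarrow> bool" where
  "contains \<pi> \<tau> \<longleftrightarrow> (\<exists>is. length is = length \<tau> \<and> sorted_wrt (<) is \<and>
      (\<forall>a<length is. is ! a < length \<pi>) \<and>
      (\<forall>a<length \<tau>. \<forall>b<length \<tau>. (\<pi> ! (is ! a) < \<pi> ! (is ! b) \<longleftrightarrow> \<tau> ! a < \<tau> ! b)))"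

definition avoids :: "nat list \<Rightarrow> nat list \<Rightarrow> bool" where
  "avoids \<pi> \<tau> \<longleftrightarrow> \<not> contains \<pi> \<tau>"

definition Av2 :: "nat \<Rightarrow> nat list \<Rightarrow> nat list \<Rightarrow> nat list set" where
  "Av2 n \<tau> \<rho> = {\<pi> \<in> perms n. avoids \<pi> \<tau> \<and> avoids \<pi> \<rho>}"

definition asc :: "nat list \<Rightarrow> nat" where
  "asc \<pi> = card {i. i + 1 < length \<pi> \<and> \<pi> ! i < \<pi> ! (i + 1)}"
definition des :: "nat list \<Rightarrow> nat" where
  "des \<pi> = card {i. i + 1 < length \<pi> \<and> \<pi> ! i > \<pi> ! (i + 1)}"
definition lrmax :: "nat list \<Rightarrow> nat" where
  "lrmax \<pi> = card {i. i < length \<pi> \<and> (\<forall>j<i. \<pi> ! j < \<pi> ! i)}"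
definition lrmin :: "nat list \<Rightarrow> nat" where
  "lrmin \<pi> = card {i. i < length \<pi> \<and> (\<forall>j<i. \<pi> ! j > \<pi> ! i)}"
definition rlmax :: "nat list \<Rightarrow> nat" where
  "rlmax \<pi> = card {i. i < length \<pi> \<and> (\<forall>j. i < j \<and> j < length \<pi> \<longrightarrow> \<pi> ! j < \<pi> ! i)}"
definition rlmin :: "nat list \<Rightarrow> nat" where
  "rlmin \<pi> = card {i. i < length \<pi> \<and> (\<forall>j. i < j \<and> j < length \<pi> \<longrightarrow> \<pi> ! j > \<pi> ! i)}"

text \<open>The generating function, with the variables p,q,u,v,s,t specialised to elements
  of an arbitrary commutative ring, as a formal power series in x.\<close>
definition F132_321 :: "'a::comm_ring_1 \<Rightarrow> 'a \<Rightarrow> 'a \<Rightarrow> 'a \<Rightarrow> 'a \<Rightarrow> 'a \<Rightarrow> 'a fps" where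
  "F132_321 p q u v s t = Abs_fps (\<lambda>n. \<Sum>\<pi>\<in>Av2 n [1,3,2] [3,2,1].
     p ^ asc \<pi> * q ^ des \<pi> * u ^ lrmax \<pi> * v ^ rlmax \<pi> * s ^ lrmin \<pi> * t ^ rlmin \<pi>)"

end

theory Submission
  imports Defs
begin

lemma ssu: "sorted_wrt (<) (xs::nat list) \<Longrightarrow> sorted_wrt (<) ys \<Longrightarrow> set xs = set ys \<Longrightarrow> xs = ys"
  by (simp add: sorted_distinct_set_unique strict_sorted_iff)

lemma all_less_3: "(\<forall>a<(3::nat). P a) \<longleftrightarrow> P 0 \<and> P 1 \<and> P 2"
proof -
  have "{a. a < (3::nat)} = {0,1,2}" by auto
  then show ?thesis by (metis (mono_tags, lifting) insert_iff mem_Collect_eq singletonD)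
qed

lemma len3: "length xs = 3 \<Longrightarrow> \<exists>x y z. xs = [x,y,z]"
  by (auto simp: numeral_3_eq_3 length_Suc_conv)

lemma contains_iff3:
  fixes \<tau> :: "nat list"
  assumes "length \<tau> = 3"
  shows "contains \<pi> \<tau> \<longleftrightarrow> (\<exists>x y z. x < y \<and> y < z \<and> z < length \<pi> \<and>
     (\<forall>a<3. \<forall>b<3. (\<pi> ! ([x,y,z] ! a) < \<pi> ! ([x,y,z] ! b) \<longleftrightarrow> \<tau> ! a < \<tau> ! b)))"
proof
  assume "contains \<pi> \<tau>"
  then obtain "is" where L0: "length is = length \<tau>" and S: "sorted_wrt (<) is"
    and B: "\<forall>a<length is. is ! a < length \<pi>"
    and C0: "\<forall>a<length \<tau>. \<forall>b<length \<tau>. (\<pi> ! (is ! a) < \<pi> ! (is ! b) \<longleftrightarrow> \<tau> ! a < \<tau> ! b)"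
    unfolding contains_def by blast
  obtain x y z where I: "is = [x,y,z]" using L0 assms len3 by metis
  have C: "\<forall>a<3. \<forall>b<3. (\<pi> ! ([x,y,z] ! a) < \<pi> ! ([x,y,z] ! b) \<longleftrightarrow> \<tau> ! a < \<tau> ! b)"
    using C0 unfolding I assms .
  have "x < y" "y < z" using S unfolding I by auto
  moreover have "z < length \<pi>" using B[rule_format, of 2] unfolding I by simp
  ultimately show "\<exists>x y z. x < y \<and> y < z \<and> z < length \<pi> \<and>
     (\<forall>a<3. \<forall>b<3. (\<pi> ! ([x,y,z] ! a) < \<pi> ! ([x,y,z] ! b) \<longleftrightarrow> \<tau> ! a < \<tau> ! b))"
    using C by blast
next
  assume "\<exists>x y z. x < y \<and> y < z \<and> z < length \<pi> \<and>
     (\<forall>a<3. \<forall>b<3. (\<pi> ! ([x,y,z] ! a) < \<pi> ! ([x,y,z] ! b) \<longleftrightarrow> \<tau> ! a < \<tau> ! b))"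
  then obtain x y z where H: "x < y" "y < z" "z < length \<pi>"
     and C: "\<forall>a<3. \<forall>b<3. (\<pi> ! ([x,y,z] ! a) < \<pi> ! ([x,y,z] ! b) \<longleftrightarrow> \<tau> ! a < \<tau> ! b)" by blast
  have 1: "length [x,y,z] = length \<tau>" using assms by simp
  have 2: "sorted_wrt (<) [x,y,z]" using H by auto
  have 3: "\<forall>a<length [x,y,z]. [x,y,z] ! a < length \<pi>"
  proof -
    have "\<forall>a<3. [x,y,z] ! a < length \<pi>"
      unfolding all_less_3 using H by simp
    then show ?thesis by simp
  qed
  have 4: "\<forall>a<length \<tau>. \<forall>b<length \<tau>. (\<pi> ! ([x,y,z] ! a) < \<pi> ! ([x,y,z] ! b) \<longleftrightarrow> \<tau> ! a < \<tau> ! b)"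
    unfolding assms by (rule C)
  show "contains \<pi> \<tau>" unfolding contains_def
    using 1 2 3 4 by blast
qed

lemma pat_aux132: "((A::nat) < A \<longleftrightarrow> False) \<and> (A < B \<longleftrightarrow> True) \<and> (A < C \<longleftrightarrow> True) \<and>
  (B < A \<longleftrightarrow> False) \<and> (B < B \<longleftrightarrow> False) \<and> (B < C \<longleftrightarrow> False) \<and>
  (C < A \<longleftrightarrow> False) \<and> (C < B \<longleftrightarrow> True) \<and> (C < C \<longleftrightarrow> False)
  \<longleftrightarrow> A < C \<and> C < B"
  by auto

lemma pat_aux321: "((A::nat) < A \<longleftrightarrow> False) \<and> (A < B \<longleftrightarrow> False) \<and> (A < C \<longleftrightarrow> False) \<and>
  (B < A \<longleftrightarrow> True) \<and> (B < B \<longleftrightarrow> False) \<and> (B < C \<longleftrightarrow> False) \<and>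
  (C < A \<longleftrightarrow> True) \<and> (C < B \<longleftrightarrow> True) \<and> (C < C \<longleftrightarrow> False)
  \<longleftrightarrow> C < B \<and> B < A"
  by auto

lemma contains132:
  "contains \<pi> [1,3,2] \<longleftrightarrow> (\<exists>x y z. x < y \<and> y < z \<and> z < length \<pi> \<and> \<pi>!x < \<pi>!z \<and> \<pi>!z < \<pi>!y)"
proof -
  have "(\<forall>a<3. \<forall>b<3. (\<pi> ! ([x,y,z] ! a) < \<pi> ! ([x,y,z] ! b) \<longleftrightarrow> [1::nat,3,2] ! a < [1,3,2] ! b))
     \<longleftrightarrow> \<pi>!x < \<pi>!z \<and> \<pi>!z < \<pi>!y" for x y z
    unfolding all_less_3 using pat_aux132[of "\<pi>!x" "\<pi>!y" "\<pi>!z"] by simp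
  then show ?thesis using contains_iff3[of "[1,3,2]" \<pi>] by simp
qed

lemma contains321:
  "contains \<pi> [3,2,1] \<longleftrightarrow> (\<exists>x y z. x < y \<and> y < z \<and> z < length \<pi> \<and> \<pi>!z < \<pi>!y \<and> \<pi>!y < \<pi>!x)"
proof -
  have "(\<forall>a<3. \<forall>b<3. (\<pi> ! ([x,y,z] ! a) < \<pi> ! ([x,y,z] ! b) \<longleftrightarrow> [3::nat,2,1] ! a < [3,2,1] ! b))
     \<longleftrightarrow> \<pi>!z < \<pi>!y \<and> \<pi>!y < \<pi>!x" for x y z
    unfolding all_less_3 using pat_aux321[of "\<pi>!x" "\<pi>!y" "\<pi>!z"] by simp
  then show ?thesis using contains_iff3[of "[3,2,1]" \<pi>] by simp
qed
definition blkf :: "nat \<Rightarrow> nat \<Rightarrow> nat \<Rightarrow> nat" where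
  "blkf k i j = (if j < i then k - i + 1 + j else if j < k then j - i + 1 else j + 1)"

definition blk :: "nat \<Rightarrow> nat \<Rightarrow> nat \<Rightarrow> nat list" where
  "blk k i n = map (blkf k i) [0..<n]"

lemma blk_nth: "j < n \<Longrightarrow> blk k i n ! j = blkf k i j"
  by (simp add: blk_def)

lemma blk_len[simp]: "length (blk k i n) = n"
  by (simp add: blk_def)

lemma blk_eq: assumes "i \<le> k" "k \<le> n"
  shows "blk k i n = [k-i+1..<k+1] @ [1..<k-i+1] @ [k+1..<n+1]"
proof (rule nth_equalityI)
  show "length (blk k i n) = length ([k-i+1..<k+1] @ [1..<k-i+1] @ [k+1..<n+1])"
    using assms by auto
  fix j assume "j < length (blk k i n)"
  then have j: "j < n" by simp
  have l1: "length [k-i+1..<k+1] = i" using assms by (simp; linarith)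
  have l2: "length [1..<k-i+1] = k - i" using assms by (simp; linarith)
  show "blk k i n ! j = ([k-i+1..<k+1] @ [1..<k-i+1] @ [k+1..<n+1]) ! j"
  proof (cases "j < i")
    case True
    then show ?thesis using assms j l1 by (simp add: blk_nth blkf_def nth_append del: upt_Suc)
  next
    case c1: False
    show ?thesis
    proof (cases "j < k")
      case True
      moreover have "j - i < k - i" using True c1 by linarith
      ultimately show ?thesis using assms j l1 l2 c1 by (simp add: blk_nth blkf_def nth_append del: upt_Suc)
    next
      case False
      moreover have "\<not> j - i < k - i" using False c1 by linarith
      ultimately show ?thesis using assms j l1 l2 c1 by (simp add: blk_nth blkf_def nth_append del: upt_Suc)
    qed
  qed
qed

definition T :: "nat \<Rightarrow> (nat \<times> nat) set" where
  "T n = {(k,i). 1 \<le> i \<and> i < k \<and> k \<le> n}"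

lemma blk_in_Av2:
  assumes "(k,i) \<in> T n"
  shows "blk k i n \<in> Av2 n [1,3,2] [3,2,1]"
proof -
  have a: "1 \<le> i" "i < k" "k \<le> n" using assms by (auto simp: T_def)
  have e: "blk k i n = [k-i+1..<k+1] @ [1..<k-i+1] @ [k+1..<n+1]" using a by (intro blk_eq) auto
  have d: "distinct (blk k i n)" unfolding e using a by (auto simp del: upt_Suc)
  have s: "set (blk k i n) = {1..n}" unfolding e using a by (auto simp del: upt_Suc)
  have n1: "\<not> contains (blk k i n) [1,3,2]"
  proof
    assume "contains (blk k i n) [1,3,2]"
    then obtain x y z where h: "x < y" "y < z" "z < n"
      "blkf k i x < blkf k i z" "blkf k i z < blkf k i y"
      unfolding contains132 by (auto simp: blk_nth)
    then show False using a by (auto simp: blkf_def split: if_splits)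
  qed
  have n2: "\<not> contains (blk k i n) [3,2,1]"
  proof
    assume "contains (blk k i n) [3,2,1]"
    then obtain x y z where h: "x < y" "y < z" "z < n"
      "blkf k i z < blkf k i y" "blkf k i y < blkf k i x"
      unfolding contains321 by (auto simp: blk_nth)
    then show False using a by (auto simp: blkf_def split: if_splits)
  qed
  show ?thesis using d s n1 n2 by (simp add: Av2_def perms_def avoids_def)
qed

lemma id_in_Av2: "[1..<n+1] \<in> Av2 n [1,3,2] [3,2,1]"
proof -
  have n1: "\<not> contains [1..<n+1] [1,3,2]"
    unfolding contains132 by (auto simp del: upt_Suc)
  have n2: "\<not> contains [1..<n+1] [3,2,1]"
    unfolding contains321 by (auto simp del: upt_Suc)
  show ?thesis using n1 n2 by (auto simp: Av2_def perms_def avoids_def simp del: upt_Suc)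
qed

lemma Av2_char:
  assumes "\<pi> \<in> Av2 n [1,3,2] [3,2,1]"
  shows "\<pi> = [1..<n+1] \<or> (\<exists>(k,i)\<in>T n. \<pi> = blk k i n)"
proof -
  have dp: "distinct \<pi>" and sp: "set \<pi> = {1..n}" and c1: "\<not> contains \<pi> [1,3,2]"
    and c2: "\<not> contains \<pi> [3,2,1]"
    using assms by (auto simp: Av2_def perms_def avoids_def)
  have N132: "\<And>x y z. x < y \<Longrightarrow> y < z \<Longrightarrow> z < length \<pi> \<Longrightarrow> \<pi>!x < \<pi>!z \<Longrightarrow> \<pi>!z < \<pi>!y \<Longrightarrow> False"
    using c1 unfolding contains132 by blast
  have N321: "\<And>x y z. x < y \<Longrightarrow> y < z \<Longrightarrow> z < length \<pi> \<Longrightarrow> \<pi>!z < \<pi>!y \<Longrightarrow> \<pi>!y < \<pi>!x \<Longrightarrow> False"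
    using c2 unfolding contains321 by blast
  show ?thesis
  proof (cases "n = 0")
    case True
    then show ?thesis using sp by simp
  next
    case False
    then have "1 \<in> set \<pi>" using sp by simp
    then obtain L R where pi: "\<pi> = L @ 1 # R" by (meson split_list)
    have dL: "distinct L" and dR: "distinct R" and L1: "1 \<notin> set L" and R1: "1 \<notin> set R"
      and LR: "set L \<inter> set R = {}" using dp pi by auto
    have sLR: "set L \<union> {1} \<union> set R = {1..n}" using sp pi by auto
    have vL: "2 \<le> x \<and> x \<le> n" if "x \<in> set L" for x
    proof -
      have "x \<in> {1..n}" using sLR that by blast
      moreover have "x \<noteq> 1" using L1 that by blast
      ultimately show ?thesis by auto
    qed
    have vR: "2 \<le> x \<and> x \<le> n" if "x \<in> set R" for x
    proof -
      have "x \<in> {1..n}" using sLR that by blast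
      moreover have "x \<noteq> 1" using R1 that by blast
      ultimately show ?thesis by auto
    qed
    have lp: "length \<pi> = length L + 1 + length R" using pi by simp
    have pL: "\<And>a. a < length L \<Longrightarrow> \<pi> ! a = L ! a" using pi by (simp add: nth_append)
    have p1: "\<pi> ! length L = 1" using pi by simp
    have pR: "\<pi> ! (length L + 1 + a) = R ! a" for a using pi
      by (simp add: nth_append)
    have sL: "sorted_wrt (<) L"
      unfolding sorted_wrt_iff_nth_less
    proof (intro allI impI)
      fix a b assume ab: "a < b" "b < length L"
      show "L ! a < L ! b"
      proof (rule ccontr)
        assume "\<not> L ! a < L ! b"
        moreover have "L ! a \<noteq> L ! b" using dL ab by (simp add: nth_eq_iff_index_eq)
        ultimately have 1: "L ! b < L ! a" by simp
        have 2: "1 < L ! b" using vL[OF nth_mem[OF ab(2)]] by linarith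
        show False using N321[of a b "length L"] ab 1 2 pL p1 lp by simp
      qed
    qed
    have sR: "sorted_wrt (<) R"
      unfolding sorted_wrt_iff_nth_less
    proof (intro allI impI)
      fix a b assume ab: "a < b" "b < length R"
      show "R ! a < R ! b"
      proof (rule ccontr)
        assume "\<not> R ! a < R ! b"
        moreover have "R ! a \<noteq> R ! b" using dR ab by (simp add: nth_eq_iff_index_eq)
        ultimately have 1: "R ! b < R ! a" by simp
        have 2: "1 < R ! b" using vR[OF nth_mem[OF ab(2)]] by linarith
        show False using N132[of "length L" "length L + 1 + a" "length L + 1 + b"] ab 1 2 pR p1 lp by simp
      qed
    qed
    have c3: "\<And>x y z. x \<in> set L \<Longrightarrow> y \<in> set L \<Longrightarrow> z \<in> set R \<Longrightarrow> x < z \<Longrightarrow> z < y \<Longrightarrow> False"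
    proof -
      fix x y z assume h: "x \<in> set L" "y \<in> set L" "z \<in> set R" "x < z" "z < y"
      obtain a where a: "a < length L" "x = L ! a" using h(1) by (metis in_set_conv_nth)
      obtain b where b: "b < length L" "y = L ! b" using h(2) by (metis in_set_conv_nth)
      obtain l where l: "l < length R" "z = R ! l" using h(3) by (metis in_set_conv_nth)
      have "a < b"
      proof (rule ccontr)
        assume "\<not> a < b"
        then have "b = a \<or> b < a" by auto
        then have "L ! b \<le> L ! a" using sL a b unfolding sorted_wrt_iff_nth_less
          by (metis less_imp_le order_refl)
        then show False using h a b by simp
      qed
      then show False
        using N132[of a b "length L + 1 + l"] a b l h pL pR lp by simp
    qed
    show ?thesis
    proof (cases "L = []")
      case True
      have pi1: "\<pi> = 1 # R" using pi True by simp
      have gt: "\<forall>x\<in>set R. 1 < x"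
      proof
        fix x assume "x \<in> set R"
        then show "1 < x" using vR[of x] by linarith
      qed
      have "sorted_wrt (<) \<pi>" unfolding pi1 using gt sR by simp
      moreover have "sorted_wrt (<) [1..<n+1]" by (simp del: upt_Suc)
      moreover have "set \<pi> = set [1..<n+1]" using sp by (simp del: upt_Suc add: atLeastLessThanSuc_atLeastAtMost)
      ultimately have "\<pi> = [1..<n+1]" by (rule ssu)
      then show ?thesis by (rule disjI1)
    next
      case Lne: False
      define lo where "lo = Min (set L)"
      define hi where "hi = Max (set L)"
      have lo_in: "lo \<in> set L" using Lne unfolding lo_def by simp
      have hi_in: "hi \<in> set L" using Lne unfolding hi_def by simp
      have lo_hi: "lo \<le> hi" using Lne unfolding lo_def hi_def by simp
      have lo2: "2 \<le> lo" using vL[OF lo_in] by simp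
      have hin: "hi \<le> n" using vL[OF hi_in] by simp
      have setL: "set L = {lo..hi}"
      proof
        show "set L \<subseteq> {lo..hi}" unfolding lo_def hi_def by (simp add: subset_iff)
        show "{lo..hi} \<subseteq> set L"
        proof
          fix y assume y: "y \<in> {lo..hi}"
          show "y \<in> set L"
          proof (rule ccontr)
            assume yn: "y \<notin> set L"
            have yb: "lo \<le> y" "y \<le> hi" using y by auto
            have "y \<in> {1..n}" using yb lo2 hin by simp
            then have "y \<in> set L \<union> {1} \<union> set R" using sLR by simp
            moreover have "y \<noteq> 1" using yb lo2 by simp
            ultimately have yR: "y \<in> set R" using yn by simp
            have "y \<noteq> lo" "y \<noteq> hi" using yn lo_in hi_in by auto
            then have "lo < y" "y < hi" using yb by simp_all
            then show False using c3[OF lo_in hi_in yR] by simp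
          qed
        qed
      qed
      have Leq: "L = [lo..<hi+1]"
      proof (rule ssu[OF sL])
        show "sorted_wrt (<) [lo..<hi+1]" by (simp del: upt_Suc)
        show "set L = set [lo..<hi+1]" unfolding setL
          by (simp add: atLeastLessThanSuc_atLeastAtMost del: upt_Suc)
      qed
      have setR: "set R = set ([2..<lo] @ [hi+1..<n+1])"
      proof -
        have "set R = {1..n} - {1} - {lo..hi}" using sLR LR R1 setL by blast
        also have "\<dots> = set ([2..<lo] @ [hi+1..<n+1])"
        proof -
          have "set ([2..<lo] @ [hi+1..<n+1]) = {2..<lo} \<union> {hi+1..<n+1}" by (simp del: upt_Suc)
          also have "\<dots> = {1..n} - {1} - {lo..hi}" using lo2 lo_hi hin by auto
          finally show ?thesis by simp
        qed
        finally show ?thesis .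
      qed
      have Req: "R = [2..<lo] @ [hi+1..<n+1]"
      proof (rule ssu[OF sR])
        show "sorted_wrt (<) ([2..<lo] @ [hi+1..<n+1])"
          using lo_hi by (simp add: sorted_wrt_append del: upt_Suc)
        show "set R = set ([2..<lo] @ [hi+1..<n+1])" by (rule setR)
      qed
      define k where "k = hi"
      define i where "i = hi + 1 - lo"
      have i_eq: "i = hi - lo + 1" using lo_hi unfolding i_def by simp
      have "hi - lo + 1 < hi" using lo2 lo_hi by linarith
      then have Ti: "(k,i) \<in> T n" using hin unfolding T_def k_def i_eq by simp
      have ik: "i \<le> k" "k \<le> n" using lo2 lo_hi hin unfolding k_def i_def by simp_all
      have e1: "k - i + 1 = lo" using lo2 lo_hi unfolding k_def i_def by simp
      have "blk k i n = [k-i+1..<k+1] @ [1..<k-i+1] @ [k+1..<n+1]"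
        using ik by (rule blk_eq)
      also have "\<dots> = [lo..<hi+1] @ [1..<lo] @ [hi+1..<n+1]"
        unfolding e1 unfolding k_def by (simp del: upt_Suc)
      also have "\<dots> = [lo..<hi+1] @ (1 # [2..<lo]) @ [hi+1..<n+1]"
        using lo2 upt_rec[of 1 lo] by (simp add: numeral_2_eq_2 del: upt_Suc)
      also have "\<dots> = \<pi>" using pi Leq Req by (simp del: upt_Suc)
      finally have "blk k i n = \<pi>" .
      then show ?thesis using Ti by auto
    qed
  qed
qed

lemma stats_map:
  fixes f :: "nat \<Rightarrow> nat"
  shows "asc (map f [0..<n]) = card {j. j+1 < n \<and> f j < f (j+1)}"
    and "des (map f [0..<n]) = card {j. j+1 < n \<and> f (j+1) < f j}"
    and "lrmax (map f [0..<n]) = card {j. j < n \<and> (\<forall>j'<j. f j' < f j)}"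
    and "lrmin (map f [0..<n]) = card {j. j < n \<and> (\<forall>j'<j. f j < f j')}"
    and "rlmax (map f [0..<n]) = card {j. j < n \<and> (\<forall>j'. j < j' \<and> j' < n \<longrightarrow> f j' < f j)}"
    and "rlmin (map f [0..<n]) = card {j. j < n \<and> (\<forall>j'. j < j' \<and> j' < n \<longrightarrow> f j < f j')}"
proof -
  have e: "\<And>j. j < n \<Longrightarrow> map f [0..<n] ! j = f j" by simp
  show "asc (map f [0..<n]) = card {j. j+1 < n \<and> f j < f (j+1)}"
    unfolding asc_def by (rule arg_cong[where f=card]) (auto simp: e)
  show "des (map f [0..<n]) = card {j. j+1 < n \<and> f (j+1) < f j}"
    unfolding des_def by (rule arg_cong[where f=card]) (auto simp: e)
  show "lrmax (map f [0..<n]) = card {j. j < n \<and> (\<forall>j'<j. f j' < f j)}"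
    unfolding lrmax_def by (rule arg_cong[where f=card]) (auto simp: e)
  show "lrmin (map f [0..<n]) = card {j. j < n \<and> (\<forall>j'<j. f j < f j')}"
    unfolding lrmin_def by (rule arg_cong[where f=card]) (auto simp: e)
  show "rlmax (map f [0..<n]) = card {j. j < n \<and> (\<forall>j'. j < j' \<and> j' < n \<longrightarrow> f j' < f j)}"
    unfolding rlmax_def by (rule arg_cong[where f=card]) (auto simp: e)
  show "rlmin (map f [0..<n]) = card {j. j < n \<and> (\<forall>j'. j < j' \<and> j' < n \<longrightarrow> f j < f j')}"
    unfolding rlmin_def by (rule arg_cong[where f=card]) (auto simp: e)
qed

lemma blk_stats:
  assumes a: "1 \<le> i" "i < k" "k \<le> n"
  shows "asc (blk k i n) = n - 2" "des (blk k i n) = 1"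
    "lrmax (blk k i n) = i + (n - k)" "lrmin (blk k i n) = 2"
    "rlmax (blk k i n) = (if k = n then 2 else 1)" "rlmin (blk k i n) = n - i"
proof -
  let ?f = "blkf k i"
  have s1: "{j. j+1 < n \<and> ?f j < ?f (j+1)} = {0..<n-1} - {i-1}"
    using a by (auto simp: blkf_def split: if_splits)
  show "asc (blk k i n) = n - 2" unfolding blk_def stats_map s1
    using a by (simp add: card_Diff_singleton)
  have s2: "{j. j+1 < n \<and> ?f (j+1) < ?f j} = {i-1}"
    using a by (auto simp: blkf_def split: if_splits)
  show "des (blk k i n) = 1" unfolding blk_def stats_map s2 by simp
  have s3: "{j. j < n \<and> (\<forall>j'<j. ?f j' < ?f j)} = {0..<i} \<union> {k..<n}"
  proof (rule set_eqI, rule iffI)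
    fix x assume "x \<in> {j. j < n \<and> (\<forall>j'<j. ?f j' < ?f j)}"
    then have x: "x < n" "\<forall>j'<x. ?f j' < ?f x" by auto
    show "x \<in> {0..<i} \<union> {k..<n}"
    proof (rule ccontr)
      assume "x \<notin> {0..<i} \<union> {k..<n}"
      then have "i \<le> x" "x < k" using x by auto
      then show False using x(2)[rule_format, of 0] a by (auto simp: blkf_def split: if_splits)
    qed
  next
    fix x assume "x \<in> {0..<i} \<union> {k..<n}"
    then show "x \<in> {j. j < n \<and> (\<forall>j'<j. ?f j' < ?f j)}"
      using a by (auto simp: blkf_def split: if_splits)
  qed
  show "lrmax (blk k i n) = i + (n - k)" unfolding blk_def stats_map s3
    using a by (subst card_Un_disjoint) auto
  have s4: "{j. j < n \<and> (\<forall>j'<j. ?f j < ?f j')} = {0, i}"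
  proof (rule set_eqI, rule iffI)
    fix x assume "x \<in> {j. j < n \<and> (\<forall>j'<j. ?f j < ?f j')}"
    then have x: "x < n" "\<forall>j'<x. ?f x < ?f j'" by auto
    show "x \<in> {0, i}"
    proof (rule ccontr)
      assume "x \<notin> {0, i}"
      then have "0 < x \<and> x < i \<or> i < x" by auto
      then show False
      proof
        assume "0 < x \<and> x < i"
        then show False using x(2)[rule_format, of 0] a by (auto simp: blkf_def split: if_splits)
      next
        assume "i < x"
        then show False using x(2)[rule_format, of i] a by (auto simp: blkf_def split: if_splits)
      qed
    qed
  next
    fix x assume "x \<in> {0, i}"
    then show "x \<in> {j. j < n \<and> (\<forall>j'<j. ?f j < ?f j')}"
      using a by (auto simp: blkf_def split: if_splits)
  qed
  show "lrmin (blk k i n) = 2" unfolding blk_def stats_map s4 using a by simp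
  have s5: "{j. j < n \<and> (\<forall>j'. j < j' \<and> j' < n \<longrightarrow> ?f j' < ?f j)} = (if k = n then {i-1, n-1} else {n-1})"
  proof (rule set_eqI, rule iffI)
    fix x assume "x \<in> {j. j < n \<and> (\<forall>j'. j < j' \<and> j' < n \<longrightarrow> ?f j' < ?f j)}"
    then have x: "x < n" "\<forall>j'. x < j' \<and> j' < n \<longrightarrow> ?f j' < ?f x" by auto
    show "x \<in> (if k = n then {i-1, n-1} else {n-1})"
    proof (rule ccontr)
      assume nx: "x \<notin> (if k = n then {i-1, n-1} else {n-1})"
      show False
      proof (cases "k = n")
        case True
        then have "x < i - 1 \<or> (i \<le> x \<and> x < n - 1)" using nx x by auto
        then show False
        proof
          assume xi: "x < i - 1"
          then have "?f (i-1) < ?f x" using x(2) a by auto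
          then show False using xi a True by (auto simp: blkf_def split: if_splits)
        next
          assume xi: "i \<le> x \<and> x < n - 1"
          then have "?f (n-1) < ?f x" using x(2) a by auto
          then show False using xi a True by (auto simp: blkf_def split: if_splits)
        qed
      next
        case False
        then have xi: "x < n - 1" using nx x by auto
        then have "?f (n-1) < ?f x" using x(2) a by auto
        then show False using xi a False by (auto simp: blkf_def split: if_splits)
      qed
    qed
  next
    fix x assume "x \<in> (if k = n then {i-1, n-1} else {n-1})"
    then show "x \<in> {j. j < n \<and> (\<forall>j'. j < j' \<and> j' < n \<longrightarrow> ?f j' < ?f j)}"
      using a by (auto simp: blkf_def split: if_splits)
  qed
  show "rlmax (blk k i n) = (if k = n then 2 else 1)" unfolding blk_def stats_map s5
    using a by auto
  have s6: "{j. j < n \<and> (\<forall>j'. j < j' \<and> j' < n \<longrightarrow> ?f j < ?f j')} = {i..<n}"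
  proof (rule set_eqI, rule iffI)
    fix x assume "x \<in> {j. j < n \<and> (\<forall>j'. j < j' \<and> j' < n \<longrightarrow> ?f j < ?f j')}"
    then have x: "x < n" "\<forall>j'. x < j' \<and> j' < n \<longrightarrow> ?f x < ?f j'" by auto
    show "x \<in> {i..<n}"
    proof (rule ccontr)
      assume "x \<notin> {i..<n}"
      then have "x < i" using x by auto
      then show False using x(2)[rule_format, of i] a by (auto simp: blkf_def split: if_splits)
    qed
  next
    fix x assume "x \<in> {i..<n}"
    then show "x \<in> {j. j < n \<and> (\<forall>j'. j < j' \<and> j' < n \<longrightarrow> ?f j < ?f j')}"
      using a by (auto simp: blkf_def split: if_splits)
  qed
  show "rlmin (blk k i n) = n - i" unfolding blk_def stats_map s6 by simp
qed

lemma id_eq_map: "[1..<n+1] = map (\<lambda>j. j + 1) [0..<n]"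
  using map_add_upt[of 1 n] by simp

lemma id_stats:
  assumes "0 < n"
  shows "asc [1..<n+1] = n - 1" "des [1..<n+1] = 0" "lrmax [1..<n+1] = n"
    "lrmin [1..<n+1] = 1" "rlmax [1..<n+1] = 1" "rlmin [1..<n+1] = n"
proof -
  have s1: "{j. j+1 < n \<and> j + 1 < j + 1 + 1} = {0..<n-1}" by auto
  show "asc [1..<n+1] = n - 1" unfolding id_eq_map stats_map s1 by simp
  show "des [1..<n+1] = 0" unfolding id_eq_map stats_map by simp
  have s3: "{j. j < n \<and> (\<forall>j'<j. j' + 1 < j + 1)} = {0..<n}" by auto
  show "lrmax [1..<n+1] = n" unfolding id_eq_map stats_map s3 by simp
  have s4: "{j. j < n \<and> (\<forall>j'<j. j + 1 < j' + 1)} = {0}" using assms by auto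
  show "lrmin [1..<n+1] = 1" unfolding id_eq_map stats_map s4 by simp
  have s5: "{j. j < n \<and> (\<forall>j'. j < j' \<and> j' < n \<longrightarrow> j' + 1 < j + 1)} = {n-1}"
  proof (rule set_eqI, rule iffI)
    fix x assume "x \<in> {j. j < n \<and> (\<forall>j'. j < j' \<and> j' < n \<longrightarrow> j' + 1 < j + 1)}"
    then have x: "x < n" "\<forall>j'. x < j' \<and> j' < n \<longrightarrow> j' + 1 < x + 1" by auto
    show "x \<in> {n-1}"
    proof (rule ccontr)
      assume "x \<notin> {n-1}"
      then have "x < n - 1" using x by auto
      then show False using x(2)[rule_format, of "n-1"] by auto
    qed
  qed (use assms in auto)
  show "rlmax [1..<n+1] = 1" unfolding id_eq_map stats_map s5 by simp
  have s6: "{j. j < n \<and> (\<forall>j'. j < j' \<and> j' < n \<longrightarrow> j + 1 < j' + 1)} = {0..<n}" by auto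
  show "rlmin [1..<n+1] = n" unfolding id_eq_map stats_map s6 by simp
qed
unbundle fps_syntax

lemma T_finite: "finite (T n)"
  by (rule finite_subset[of _ "{0..n} \<times> {0..n}"]) (auto simp: T_def)

lemma blk_inj: "inj_on (\<lambda>(k,i). blk k i n) (T n)"
proof (rule inj_onI, clarify)
  fix k i k' i' assume t: "(k,i) \<in> T n" "(k',i') \<in> T n" and e: "blk k i n = blk k' i' n"
  have a: "1 \<le> i" "i < k" "k \<le> n" "1 \<le> i'" "i' < k'" "k' \<le> n" using t by (auto simp: T_def)
  have h: "blkf k i j = blkf k' i' j" if "j < n" for j
  proof -
    have "blk k i n ! j = blk k' i' n ! j" using e by simp
    then show ?thesis using that by (simp add: blk_nth)
  qed
  have f1: "blkf k i i = 1" using a by (simp add: blkf_def)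
  have f2: "blkf k' i' i' = 1" using a by (simp add: blkf_def)
  have "i = i'"
  proof (rule ccontr)
    assume "i \<noteq> i'"
    then have "i < i' \<or> i' < i" by auto
    then show False
    proof
      assume ii: "i < i'"
      have "blkf k' i' i = k' - i' + 1 + i" using ii by (simp add: blkf_def)
      moreover have "blkf k' i' i = 1" using h[of i] f1 a by simp
      ultimately show False using a by simp
    next
      assume ii: "i' < i"
      have "blkf k i i' = k - i + 1 + i'" using ii by (simp add: blkf_def)
      moreover have "blkf k i i' = 1" using h[of i'] f2 a by simp
      ultimately show False using a by simp
    qed
  qed
  moreover have "k = k'"
  proof -
    have "blkf k i 0 = blkf k' i' 0" using h a by simp
    then have "k - i + 1 = k' - i' + 1" using a by (simp add: blkf_def)
    then show ?thesis using a \<open>i = i'\<close> by simp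
  qed
  ultimately show "k = k' \<and> i = i'" by simp
qed

lemma id_notin: "[1..<n+1] \<notin> (\<lambda>(k,i). blk k i n) ` T n"
proof
  assume "[1..<n+1] \<in> (\<lambda>(k,i). blk k i n) ` T n"
  then obtain k i where t: "(k,i) \<in> T n" and e: "[1..<n+1] = blk k i n" by auto
  have a: "1 \<le> i" "i < k" "k \<le> n" using t by (auto simp: T_def)
  have "[1..<n+1] ! 0 = blk k i n ! 0" using e by simp
  then show False using a by (simp add: blk_nth blkf_def del: upt_Suc)
qed

lemma Av2_eq: "Av2 n [1,3,2] [3,2,1] = insert [1..<n+1] ((\<lambda>(k,i). blk k i n) ` T n)"
proof
  show "Av2 n [1,3,2] [3,2,1] \<subseteq> insert [1..<n+1] ((\<lambda>(k,i). blk k i n) ` T n)"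
  proof
    fix \<pi> assume "\<pi> \<in> Av2 n [1,3,2] [3,2,1]"
    then have "\<pi> = [1..<n+1] \<or> (\<exists>(k,i)\<in>T n. \<pi> = blk k i n)" by (rule Av2_char)
    then show "\<pi> \<in> insert [1..<n+1] ((\<lambda>(k,i). blk k i n) ` T n)" by auto
  qed
  show "insert [1..<n+1] ((\<lambda>(k,i). blk k i n) ` T n) \<subseteq> Av2 n [1,3,2] [3,2,1]"
    using id_in_Av2 blk_in_Av2 by auto
qed

definition wt :: "'a::comm_ring_1 \<Rightarrow> 'a \<Rightarrow> 'a \<Rightarrow> 'a \<Rightarrow> 'a \<Rightarrow> 'a \<Rightarrow> nat list \<Rightarrow> 'a" where
  "wt p q u v s t \<pi> = p ^ asc \<pi> * q ^ des \<pi> * u ^ lrmax \<pi> * v ^ rlmax \<pi> * s ^ lrmin \<pi> * t ^ rlmin \<pi>"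

definition G1 :: "'a::comm_ring_1 \<Rightarrow> 'a \<Rightarrow> 'a fps" where
  "G1 p u = Abs_fps (\<lambda>a. if a = 0 then 0 else p^(a-1) * u^a)"
definition G3 :: "'a::comm_ring_1 \<Rightarrow> 'a \<Rightarrow> 'a \<Rightarrow> 'a \<Rightarrow> 'a \<Rightarrow> 'a \<Rightarrow> 'a fps" where
  "G3 p q u v s t = Abs_fps (\<lambda>c. if c = 0 then q*s^2*v^2 else q*s^2*v*(p*t*u)^c)"
definition GI :: "'a::comm_ring_1 \<Rightarrow> 'a \<Rightarrow> 'a \<Rightarrow> 'a \<Rightarrow> 'a \<Rightarrow> 'a fps" where
  "GI p u v s t = Abs_fps (\<lambda>m. if m = 0 then 1 else s*v*p^(m-1)*(t*u)^m)"

lemma wt_id: "wt p q u v s t [1..<n+1] = GI p u v s t $ n"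
proof (cases "n = 0")
  case True
  then show ?thesis by (simp add: wt_def GI_def asc_def des_def lrmax_def lrmin_def rlmax_def rlmin_def)
next
  case False
  then show ?thesis using id_stats[of n]
    by (simp add: wt_def GI_def power_mult_distrib mult_ac del: upt_Suc)
qed

lemma wt_alg:
  fixes p q u v s t :: "'a::comm_ring_1"
  shows "p^(a+b+c) * q * u^(a+1+c) * v^(if c=0 then 2 else 1) * s^2 * t^(b+1+c)
    = (p^a*u^(a+1)) * (p^b*t^(b+1)) * (if c=0 then q*s^2*v^2 else q*s^2*v*(p*t*u)^c)"
  by (cases "c = 0") (simp_all add: power_add power_mult_distrib mult_ac)

lemma wt_blk:
  assumes "(k,i) \<in> T n"
  shows "wt p q u v s t (blk k i n) = G1 p u $ i * G1 p t $ (k - i) * G3 p q u v s t $ (n - k)"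
proof -
  have a: "1 \<le> i" "i < k" "k \<le> n" using assms by (auto simp: T_def)
  obtain a0 where a0: "i = a0 + 1" using a by (metis add.commute add_diff_inverse_nat less_one not_le)
  obtain b0 where b0: "k - i = b0 + 1" using a by (metis Suc_diff_Suc Suc_eq_plus1 le_add_diff_inverse2 less_imp_le)
  define c0 where "c0 = n - k"
  have n_eq: "n - 2 = a0 + b0 + c0" "i + (n - k) = a0 + 1 + c0" "n - i = b0 + 1 + c0"
    "(k = n) = (c0 = 0)" using a a0 b0 unfolding c0_def by auto
  have "wt p q u v s t (blk k i n) = p^(a0+b0+c0) * q * u^(a0+1+c0) * v^(if c0=0 then 2 else 1) * s^2 * t^(b0+1+c0)"
    unfolding wt_def blk_stats[OF a] n_eq by simp
  also have "\<dots> = (p^a0*u^(a0+1)) * (p^b0*t^(b0+1)) * (if c0=0 then q*s^2*v^2 else q*s^2*v*(p*t*u)^c0)"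
    by (rule wt_alg)
  also have "\<dots> = G1 p u $ i * G1 p t $ (k - i) * G3 p q u v s t $ (n - k)"
  proof -
    have "G1 p u $ i = p^a0*u^(a0+1)" unfolding G1_def a0 by simp
    moreover have "G1 p t $ (k - i) = p^b0*t^(b0+1)" unfolding G1_def b0 by simp
    moreover have "G3 p q u v s t $ (n - k) = (if c0=0 then q*s^2*v^2 else q*s^2*v*(p*t*u)^c0)"
      unfolding G3_def c0_def by simp
    ultimately show ?thesis by simp
  qed
  finally show ?thesis .
qed

lemma coeff_F: "F132_321 p q u v s t $ n = GI p u v s t $ n + (G1 p u * G1 p t * G3 p q u v s t) $ n"
proof -
  have "F132_321 p q u v s t $ n = (\<Sum>\<pi>\<in>Av2 n [1,3,2] [3,2,1]. wt p q u v s t \<pi>)"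
    unfolding F132_321_def wt_def by simp
  also have "\<dots> = wt p q u v s t [1..<n+1] + (\<Sum>\<pi>\<in>(\<lambda>(k,i). blk k i n) ` T n. wt p q u v s t \<pi>)"
    unfolding Av2_eq using id_notin T_finite by (simp del: upt_Suc)
  also have "(\<Sum>\<pi>\<in>(\<lambda>(k,i). blk k i n) ` T n. wt p q u v s t \<pi>)
      = (\<Sum>(k,i)\<in>T n. G1 p u $ i * G1 p t $ (k - i) * G3 p q u v s t $ (n - k))"
    by (subst sum.reindex[OF blk_inj]) (auto intro!: sum.cong simp: wt_blk)
  also have "\<dots> = (G1 p u * G1 p t * G3 p q u v s t) $ n"
  proof -
    let ?g = "\<lambda>k i. G1 p u $ i * G1 p t $ (k - i) * G3 p q u v s t $ (n - k)"
    have "(G1 p u * G1 p t * G3 p q u v s t) $ n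
        = (\<Sum>k=0..n. (\<Sum>i=0..k. G1 p u $ i * G1 p t $ (k - i)) * G3 p q u v s t $ (n - k))"
      by (simp add: fps_mult_nth)
    also have "\<dots> = (\<Sum>k=0..n. \<Sum>i=0..k. ?g k i)"
      by (simp add: sum_distrib_right)
    also have "\<dots> = sum (case_prod ?g) (SIGMA k:{0..n}. {0..k})"
      by (rule sum.Sigma) auto
    also have "\<dots> = sum (case_prod ?g) (T n)"
    proof (rule sum.mono_neutral_right)
      show "finite (SIGMA k:{0..n}. {0..k})" by auto
      show "T n \<subseteq> (SIGMA k:{0..n}. {0..k})" by (auto simp: T_def)
      show "\<forall>x\<in>(SIGMA k:{0..n}. {0..k}) - T n. case_prod ?g x = 0"
      proof
        fix x assume x: "x \<in> (SIGMA k:{0..n}. {0..k}) - T n"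
        obtain k i where ki: "x = (k,i)" by fastforce
        have "i \<le> k" "k \<le> n" "\<not> (1 \<le> i \<and> i < k \<and> k \<le> n)" using x unfolding ki T_def by auto
        then have "i = 0 \<or> k - i = 0" by auto
        then show "case_prod ?g x = 0" unfolding ki by (auto simp: G1_def)
      qed
    qed
    finally show ?thesis by simp
  qed
  finally show ?thesis by (simp only: wt_id)
qed

lemma geo: "(f :: 'a::comm_ring_1 fps) * (1 - fps_const c * fps_X) = Abs_fps (\<lambda>n. if n = 0 then f $ 0 else f $ n - c * f $ (n - 1))"
proof -
  have "f * (1 - fps_const c * fps_X) = f - fps_const c * (fps_X * f)" by (simp add: algebra_simps)
  then show ?thesis by (simp add: fps_eq_iff)
qed

lemma G1_geo: "G1 p u * (1 - fps_const (p*u) * fps_X) = fps_const u * fps_X"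
  unfolding geo
proof (rule fps_ext)
  fix n show "Abs_fps (\<lambda>n. if n = 0 then G1 p u $ 0 else G1 p u $ n - p * u * G1 p u $ (n - 1)) $ n = (fps_const u * fps_X) $ n"
  proof (cases n)
    case 0 then show ?thesis by (simp add: G1_def)
  next
    case (Suc m) then show ?thesis
      by (cases m) (simp_all add: G1_def fps_X_def mult_ac)
  qed
qed

lemma G3_geo: "G3 p q u v s t * (1 - fps_const (p*t*u) * fps_X) =
   fps_const (q*s^2*v^2) + fps_const (q*s^2*v*(p*t*u) - q*s^2*v^2*(p*t*u)) * fps_X"
  unfolding geo
proof (rule fps_ext)
  fix n show "Abs_fps (\<lambda>n. if n = 0 then G3 p q u v s t $ 0 else G3 p q u v s t $ n - p * t * u * G3 p q u v s t $ (n - 1)) $ n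
     = (fps_const (q*s^2*v^2) + fps_const (q*s^2*v*(p*t*u) - q*s^2*v^2*(p*t*u)) * fps_X) $ n"
  proof (cases n)
    case 0 then show ?thesis by (simp add: G3_def)
  next
    case (Suc m) then show ?thesis
      by (cases m) (simp_all add: G3_def fps_X_def mult_ac)
  qed
qed

lemma GI_geo: "GI p u v s t * (1 - fps_const (p*t*u) * fps_X) = 1 + fps_const (s*v*t*u - p*t*u) * fps_X"
  unfolding geo
proof (rule fps_ext)
  fix n show "Abs_fps (\<lambda>n. if n = 0 then GI p u v s t $ 0 else GI p u v s t $ n - p * t * u * GI p u v s t $ (n - 1)) $ n
     = (1 + fps_const (s*v*t*u - p*t*u) * fps_X) $ n"
  proof (cases n)
    case 0 then show ?thesis by (simp add: GI_def)
  next
    case (Suc m) then show ?thesis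
      by (cases m) (simp_all add: GI_def fps_X_def mult_ac power_mult_distrib)
  qed
qed

lemma gen_id:
  fixes p q u v s t X :: "'a::comm_ring_1"
  shows "(1 + (s*v*t*u - p*t*u) * X) * (1 - (p*t) * X) * (1 - (p*u) * X)
     + (u * X) * (t * X) * ((q*s^2*v^2) + (q*s^2*v*(p*t*u) - q*s^2*v^2*(p*t*u)) * X)
    = 1 + (s*t*u*v) * X + (q*s^2*t*u*v^2) * X^2
      - (p^3*t^2*u^2) * X^3
      + (p^2*t*u) * X^2 * (1 + t + u + (s*t*u*v) * X)
      - p * X * (u
          + (s*t^2*u*v) * X * (1 + (q*s*u*(v - 1)) * X)
          + t * (1 + u + (s*u^2*v) * X))"
  by (simp add: algebra_simps power2_eq_square power3_eq_cube)

lemma fin_id: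
  fixes p q u v s t :: "'a::comm_ring_1"
  shows "(1 + fps_const (s*v*t*u - p*t*u) * fps_X) * (1 - fps_const (p*t) * fps_X) * (1 - fps_const (p*u) * fps_X)
     + (fps_const u * fps_X) * (fps_const t * fps_X) * (fps_const (q*s^2*v^2) + fps_const (q*s^2*v*(p*t*u) - q*s^2*v^2*(p*t*u)) * fps_X)
    = 1 + fps_const (s*t*u*v) * fps_X + fps_const (q*s^2*t*u*v^2) * fps_X^2
      - fps_const (p^3*t^2*u^2) * fps_X^3
      + fps_const (p^2*t*u) * fps_X^2 * (1 + fps_const t + fps_const u + fps_const (s*t*u*v) * fps_X)
      - fps_const p * fps_X * (fps_const u
          + fps_const (s*t^2*u*v) * fps_X * (1 + fps_const (q*s*u*(v - 1)) * fps_X)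
          + fps_const t * (1 + fps_const u + fps_const (s*u^2*v) * fps_X))"
  unfolding fps_const_mult[symmetric] fps_const_power[symmetric] fps_const_sub[symmetric] fps_const_1_eq_1
  by (rule gen_id)

lemma regroup:
  fixes a b c e d1 d2 d3 :: "'a::comm_ring_1"
  shows "(a + b*c*e) * (d1*d2*d3) = (a*d3)*d1*d2 + (b*d2)*(c*d1)*(e*d3)"
  by (simp add: algebra_simps)

theorem theorem5:
  fixes p q u v s t :: "'a::comm_ring_1"
  shows "F132_321 p q u v s t *
      ((1 - fps_const (p*t) * fps_X) * (1 - fps_const (p*u) * fps_X) * (1 - fps_const (p*t*u) * fps_X))
    = 1 + fps_const (s*t*u*v) * fps_X + fps_const (q*s^2*t*u*v^2) * fps_X^2
      - fps_const (p^3*t^2*u^2) * fps_X^3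
      + fps_const (p^2*t*u) * fps_X^2 * (1 + fps_const t + fps_const u + fps_const (s*t*u*v) * fps_X)
      - fps_const p * fps_X * (fps_const u
          + fps_const (s*t^2*u*v) * fps_X * (1 + fps_const (q*s*u*(v - 1)) * fps_X)
          + fps_const t * (1 + fps_const u + fps_const (s*u^2*v) * fps_X))"
proof -
  have F: "F132_321 p q u v s t = GI p u v s t + G1 p u * G1 p t * G3 p q u v s t"
    by (rule fps_ext) (simp add: coeff_F)
  show ?thesis
    unfolding F regroup GI_geo G1_geo G3_geo by (rule fin_id)
qed

end
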